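(* Let $\lambda$ be a nonzero real number and $n\ge1$ an integer. Then, as polynomials in $x$, $$\sum_{k=1}^{n}S_{2,\lambda}(n,k)\frac{x^{k}}{k}=\frac{1}{n}\sum_{j=0}^{n-1}\binom{n}{j}\beta_{j,\lambda}(1-\lambda)\,\phi_{n-j,\lambda}(x).$$ In particular, for $x=1$, $$\sum_{k=1}^{n}\frac{S_{2,\lambda}(n,k)}{k}=\frac{1}{n}\sum_{j=0}^{n-1}\binom{n}{j}\beta_{j,\lambda}(1-\lambda)\,\phi_{n-j,\lambda},$$ where $\phi_{m,\lambda}=\phi_{m,\lambda}(1)$.
   Context: For real $y$ and integer $k\ge0$: $(y)_{0,\lambda}=1$, $(y)_{k,\lambda}=y(y-\lambda)\cdots(y-(k-1)\lambda)$; $(y)_0=1$, $(y)_k=y(y-1)\cdots(y-k+1)$. The degenerate exponential is $e_\lambda^x(t)=\sum_{k\ge0}(x)_{k,\lambda}t^k/k!=(1+\lambda t)^{x/\lambda}$, $e_\lambda(t)=e^1_\lambda(t)$. The degenerate Bernoulli polynomials are defined by $\frac{t}{e_\lambda(t)-1}e_\lambda^x(t)=\sum_{n\ge0}\beta_{n,\lambda}(x)\frac{t^n}{n!}$. The degenerate Bell polynomials are defined by $e^{x(e_\lambda(t)-1)}=\sum_{n\ge0}\phi_{n,\lambda}(x)\frac{t^n}{n!}$, and the degenerate Bell numbers are $\phi_{n,\lambda}=\phi_{n,\lambda}(1)$. The degenerate Stirling numbers of the second kind are defined by $(x)_{n,\lambda}=\sum_{k=0}^{n}S_{2,\lambda}(n,k)(x)_{k}$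 ($n\ge0$). *)

theory Defs
  imports "HOL-Computational_Algebra.Formal_Power_Series"
begin

definition dfall :: "real \<Rightarrow> real \<Rightarrow> nat \<Rightarrow> real" where
  "dfall lam y k = (\<Prod>i<k. (y - of_nat i * lam))"

definition ffall :: "real \<Rightarrow> nat \<Rightarrow> real" where
  "ffall y k = (\<Prod>i<k. (y - of_nat i))"

definition dexp :: "real \<Rightarrow> real \<Rightarrow> real fps" where
  "dexp lam x = Abs_fps (\<lambda>k. dfall lam x k / fact k)"

text \<open>Degenerate Bernoulli polynomials: t/(e_lambda(t)-1) e_lambda^x(t) = sum beta_{n,lambda}(x) t^n/n!.
  Here t/(e_lambda(t)-1) is the inverse of the series (e_lambda(t)-1)/t.\<close>
definition dbernoulli :: "real \<Rightarrow> nat \<Rightarrow> real \<Rightarrow> real" where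
  "dbernoulli lam n x =
     fact n * fps_nth (inverse (fps_shift 1 (dexp lam 1 - 1)) * dexp lam x) n"

definition dbell :: "real \<Rightarrow> nat \<Rightarrow> real \<Rightarrow> real" where
  "dbell lam n x = fact n * fps_nth (fps_compose (fps_exp x) (dexp lam 1 - 1)) n"

text \<open>Degenerate Stirling numbers of the second kind, defined by
  (x)_{n,lambda} = sum_{k=0}^n S2_lambda(n,k) (x)_k for all x
  (coefficients normalised to 0 beyond n so that they are unique).\<close>
definition dstirling2 :: "real \<Rightarrow> nat \<Rightarrow> nat \<Rightarrow> real" where
  "dstirling2 lam n = (THE c. (\<forall>k>n. c k = 0) \<and>
      (\<forall>x::real. dfall lam x n = (\<Sum>k\<le>n. c k * ffall x k)))"

end

theory Submission imports Defs begin
unbundle fps_syntax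

definition "EE lam = dexp lam 1"
definition "RR lam = fps_shift 1 (EE lam - 1)"
definition "PP lam k = (EE lam - 1)^k"
definition "TT lam n k = fact n / fact k * (PP lam k $ n)"
definition "QQ lam = inverse (RR lam) * dexp lam (1 - lam)"

lemma dfall_Suc: "dfall lam y (Suc n) = dfall lam y n * (y - of_nat n * lam)"
  by (simp add: dfall_def)

lemma ffall_Suc: "ffall y (Suc n) = ffall y n * (y - of_nat n)"
  by (simp add: ffall_def)

lemma L1: "dfall lam 1 (Suc n) = dfall lam (1-lam) n"
  unfolding dfall_def prod.lessThan_Suc_shift by (simp add: algebra_simps)

lemma L2: "fps_deriv (EE lam) = dexp lam (1-lam)"
proof (rule fps_ext)
  fix n
  have "fps_deriv (EE lam) $ n = of_nat (Suc n) * (dfall lam 1 (Suc n) / fact (Suc n))"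
    by (simp add: EE_def dexp_def)
  also have "\<dots> = dfall lam (1-lam) n / fact n"
    by (simp add: L1 fact_Suc del: of_nat_Suc)
  finally show "fps_deriv (EE lam) $ n = dexp lam (1-lam) $ n" by (simp add: dexp_def)
qed

lemma E00: "EE lam $ 0 = 1"
  unfolding EE_def dexp_def dfall_def by simp

lemma E0: "(EE lam - 1) $ 0 = 0"
  by (simp add: E00)

lemma L3: "EE lam - 1 = fps_X * RR lam"
  by (rule fps_ext) (auto simp: RR_def E00)

lemma L4: "RR lam $ 0 = 1"
  by (simp add: RR_def EE_def dexp_def dfall_def)

lemma L5: "n < k \<Longrightarrow> PP lam k $ n = 0"
  by (simp add: PP_def L3 power_mult_distrib fps_X_power_mult_nth)

lemma L6: "k \<ge> 1 \<Longrightarrow> of_nat k * (QQ lam * PP lam k) = fps_X * fps_deriv (PP lam k)"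
proof -
  assume k: "k \<ge> 1"
  have BR: "inverse (RR lam) * RR lam = 1" using L4 by (intro inverse_mult_eq_1) simp
  have P: "PP lam k = fps_X * RR lam * PP lam (k-1)"
    using k by (cases k) (simp_all add: PP_def L3)
  have D: "fps_deriv (PP lam k) = of_nat k * dexp lam (1-lam) * PP lam (k-1)"
    unfolding PP_def fps_deriv_power' by (simp add: L2)
  show ?thesis
    unfolding D QQ_def
    apply (subst P)
    using BR by (simp add: mult_ac)
qed

lemma L7: "dexp lam (1-lam) + fps_const lam * (fps_X * dexp lam (1-lam)) = EE lam"
proof (rule fps_ext)
  fix n show "(dexp lam (1-lam) + fps_const lam * (fps_X * dexp lam (1-lam))) $ n = EE lam $ n"
  proof (cases n)
    case 0 then show ?thesis by (simp add: E00) (simp add: dexp_def dfall_def)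
  next
    case (Suc m)
    have "(dexp lam (1-lam) + fps_const lam * (fps_X * dexp lam (1-lam))) $ n
       = dfall lam (1-lam) m * (1 - lam - of_nat m * lam) / fact (Suc m) + lam * (dfall lam (1-lam) m / fact m)"
      by (simp add: Suc dexp_def dfall_Suc del: fact_Suc)
    also have "\<dots> = dfall lam (1-lam) m / fact (Suc m)"
    proof -
      have f: "fact m > (0::real)" by simp
      have m: "(1 + real m) > 0" by simp
      define d where "d = dfall lam (1 - lam) m"
      define ff where "ff = (fact m :: real)"
      have "d * (1 - lam - real m * lam) / ((1 + real m) * ff) + lam * (d / ff) = d / ((1 + real m) * ff)"
        using f m unfolding ff_def[symmetric] by (simp add: divide_simps) (simp add: algebra_simps)
      then show ?thesis unfolding fact_Suc d_def ff_def by (simp add: algebra_simps)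
    qed
    also have "\<dots> = EE lam $ n" by (simp add: Suc EE_def dexp_def L1 del: fact_Suc)
    finally show ?thesis .
  qed
qed

lemma L8: "of_nat (Suc n) * (PP lam (Suc k) $ Suc n) = of_nat (Suc k) * (PP lam (Suc k) $ n) + of_nat (Suc k) * (PP lam k $ n) - lam * of_nat n * (PP lam (Suc k) $ n)"
proof -
  have D: "fps_deriv (PP lam (Suc k)) = fps_const (of_nat (Suc k)) * (dexp lam (1-lam) * PP lam k)"
    unfolding PP_def fps_deriv_power by (simp add: L2 mult_ac)
  have H: "fps_deriv (PP lam (Suc k)) + fps_const lam * (fps_X * fps_deriv (PP lam (Suc k)))
     = fps_const (of_nat (Suc k)) * PP lam (Suc k) + fps_const (of_nat (Suc k)) * PP lam k"
  proof -
    have "fps_deriv (PP lam (Suc k)) + fps_const lam * (fps_X * fps_deriv (PP lam (Suc k)))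
       = fps_const (of_nat (Suc k)) * ((dexp lam (1-lam) + fps_const lam * (fps_X * dexp lam (1-lam))) * PP lam k)"
      unfolding D by (simp add: algebra_simps)
    also have "\<dots> = fps_const (of_nat (Suc k)) * (((EE lam - 1) + 1) * PP lam k)" by (simp add: L7)
    also have "\<dots> = fps_const (of_nat (Suc k)) * PP lam (Suc k) + fps_const (of_nat (Suc k)) * PP lam k"
      by (simp add: PP_def algebra_simps)
    finally show ?thesis .
  qed
  have "(fps_deriv (PP lam (Suc k)) + fps_const lam * (fps_X * fps_deriv (PP lam (Suc k)))) $ n
     = of_nat (Suc n) * (PP lam (Suc k) $ Suc n) + lam * of_nat n * (PP lam (Suc k) $ n)"
    by (cases n) (simp_all add: algebra_simps)
  also note H
  finally show ?thesis by (simp add: algebra_simps)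
qed

lemma T0: "TT lam 0 k = (if k = 0 then 1 else 0)"
  by (cases k) (simp_all add: TT_def L5, simp add: PP_def)

lemma TSuc0: "TT lam (Suc n) 0 = 0"
  by (simp add: TT_def PP_def)

lemma Tbig: "n < k \<Longrightarrow> TT lam n k = 0"
  by (simp add: TT_def L5)

lemma TSuc: "TT lam (Suc n) (Suc k) = (of_nat (Suc k) - lam * of_nat n) * TT lam n (Suc k) + TT lam n k"
proof -
  have "TT lam (Suc n) (Suc k) = fact n / fact (Suc k) * (of_nat (Suc n) * (PP lam (Suc k) $ Suc n))"
    by (simp add: TT_def fact_Suc del: of_nat_Suc)
  also have "\<dots> = fact n / fact (Suc k) * (of_nat (Suc k) * (PP lam (Suc k) $ n) + of_nat (Suc k) * (PP lam k $ n) - lam * of_nat n * (PP lam (Suc k) $ n))"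
    by (simp only: L8)
  also have "\<dots> = (of_nat (Suc k) - lam * of_nat n) * TT lam n (Suc k) + TT lam n k"
    unfolding TT_def by (simp add: fact_Suc field_simps del: of_nat_Suc)
  finally show ?thesis .
qed

lemma L9: "dfall lam x n = (\<Sum>k\<le>n. TT lam n k * ffall x k)"
proof (induction n)
  case 0
  then show ?case by (simp add: T0 dfall_def ffall_def)
next
  case (Suc n)
  define g where "g k = (of_nat k - lam * of_nat n) * TT lam n k * ffall x k" for k
  have g0: "g 0 = 0" by (cases n) (simp_all add: g_def TSuc0)
  have gS: "g (Suc n) = 0" by (simp add: g_def Tbig)
  have "(\<Sum>k\<le>Suc n. TT lam (Suc n) k * ffall x k) = (\<Sum>k\<le>n. TT lam (Suc n) (Suc k) * ffall x (Suc k))"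
    by (simp add: sum.atMost_Suc_shift TSuc0 del: sum.atMost_Suc)
  also have "\<dots> = (\<Sum>k\<le>n. g (Suc k)) + (\<Sum>k\<le>n. TT lam n k * ffall x (Suc k))"
    unfolding sum.distrib[symmetric] by (rule sum.cong) (simp_all add: TSuc g_def algebra_simps del: of_nat_Suc)
  also have "(\<Sum>k\<le>n. g (Suc k)) = (\<Sum>k\<le>n. g k)"
  proof -
    have "(\<Sum>k\<le>Suc n. g k) = g 0 + (\<Sum>k\<le>n. g (Suc k))" by (rule sum.atMost_Suc_shift)
    moreover have "(\<Sum>k\<le>Suc n. g k) = (\<Sum>k\<le>n. g k) + g (Suc n)" by simp
    ultimately show ?thesis using g0 gS by simp
  qed
  also have "(\<Sum>k\<le>n. g k) + (\<Sum>k\<le>n. TT lam n k * ffall x (Suc k)) = (\<Sum>k\<le>n. TT lam n k * ffall x k) * (x - of_nat n * lam)"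
    unfolding sum.distrib[symmetric] sum_distrib_right
    by (rule sum.cong) (simp_all add: g_def ffall_Suc algebra_simps)
  also have "\<dots> = dfall lam x (Suc n)" by (simp add: dfall_Suc Suc.IH)
  finally show ?case ..
qed

lemma ffall_zero: "k < j \<Longrightarrow> ffall (real k) j = 0"
  unfolding ffall_def by (rule prod_zero) auto

lemma ffall_nz: "ffall (real k) k \<noteq> 0"
  unfolding ffall_def by (rule prod_pos[THEN less_imp_neq, symmetric]) auto

lemma U: assumes "\<forall>k>n. c k = 0" "\<forall>x. (\<Sum>k\<le>n. c k * ffall x k) = 0" shows "c k = 0"
proof (induction k rule: less_induct)
  case (less k)
  show ?case
  proof (cases "k \<le> n")
    case False then show ?thesis using assms(1) by simp
  next
    case True
    have "(\<Sum>j\<le>n. c j * ffall (real k) j) = c k * ffall (real k) k + (\<Sum>j\<in>{..n}-{k}. c j * ffall (real k) j)"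
      using True by (subst sum.remove[of _ k]) auto
    also have "(\<Sum>j\<in>{..n}-{k}. c j * ffall (real k) j) = 0"
    proof (rule sum.neutral, rule ballI)
      fix j assume "j \<in> {..n}-{k}"
      then have "j < k \<or> k < j" by auto
      then show "c j * ffall (real k) j = 0" using less.IH ffall_zero by auto
    qed
    finally show ?thesis using assms(2) ffall_nz[of k] by simp
  qed
qed

lemma L10: "dstirling2 lam n = TT lam n"
  unfolding dstirling2_def
proof (rule the_equality)
  show "(\<forall>k>n. TT lam n k = 0) \<and> (\<forall>x. dfall lam x n = (\<Sum>k\<le>n. TT lam n k * ffall x k))"
    using Tbig L9 by blast
next
  fix c assume c: "(\<forall>k>n. c k = 0) \<and> (\<forall>x::real. dfall lam x n = (\<Sum>k\<le>n. c k * ffall x k))"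
  have "c k - TT lam n k = 0" for k
  proof (rule U[of n "\<lambda>k. c k - TT lam n k"])
    show "\<forall>k>n. c k - TT lam n k = 0" using c Tbig by simp
    show "\<forall>x. (\<Sum>k\<le>n. (c k - TT lam n k) * ffall x k) = 0"
      using c L9 by (simp add: algebra_simps sum_subtractf)
  qed
  then show "c = TT lam n" by auto
qed

lemma H1: "(n::nat) \<ge> 1 \<Longrightarrow> (1 / real n) * (fact n * (x^k / fact k * (real n * P / real k))) = fact n / fact k * P * x ^ k / real k"
  by (simp add: field_simps)
lemma H2: "(c::real) * fact j * fact (n-j) = fact n \<Longrightarrow> c * (fact j * q) * (fact (n-j) * f) = fact n * (q * f)"
  by (metis mult.assoc mult.left_commute)

lemma QP: "k \<ge> 1 \<Longrightarrow> (QQ lam * PP lam k) $ n = of_nat n * (PP lam k $ n) / of_nat k"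
proof -
  assume k: "k \<ge> 1"
  have "(of_nat k * (QQ lam * PP lam k)) $ n = (fps_X * fps_deriv (PP lam k)) $ n" using L6[OF k] by simp
  moreover have e1: "(of_nat k * f) $ n = of_nat k * f $ n" for f :: "real fps"
    by (simp flip: fps_of_nat)
  moreover have e2: "(fps_X * fps_deriv (PP lam k)) $ n = of_nat n * (PP lam k $ n)"
    by (cases n) simp_all
  ultimately have "of_nat k * (QQ lam * PP lam k) $ n = of_nat n * (PP lam k $ n)"
    by simp
  then show ?thesis using k by (simp add: field_simps)
qed

lemma mainx:
  assumes n: "n \<ge> 1"
  shows "(\<Sum>k=1..n. dstirling2 lam n k * x ^ k / of_nat k) =
            (1 / of_nat n) * (\<Sum>j=0..n-1. of_nat (n choose j) * dbernoulli lam j (1 - lam)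
                                          * dbell lam (n - j) x)"
proof -
  define Phi where "Phi = fps_compose (fps_exp x) (EE lam - 1)"
  define F where "F = (\<Sum>k=1..n. fps_const (x^k / fact k) * PP lam k)"
  have bell: "dbell lam m x = fact m * (Phi $ m)" for m
    by (simp add: dbell_def Phi_def EE_def)
  have bern: "dbernoulli lam j (1 - lam) = fact j * (QQ lam $ j)" for j
    by (simp add: dbernoulli_def QQ_def RR_def EE_def)
  have Fn: "F $ m = (\<Sum>k=1..n. x^k / fact k * (PP lam k $ m))" for m
    by (simp add: F_def fps_sum_nth)
  have F0: "F $ 0 = 0" unfolding Fn by (rule sum.neutral) (auto simp: L5)
  have PhiF: "Phi $ m = F $ m" if "1 \<le> m" "m \<le> n" for m
  proof -
    have "Phi $ m = (\<Sum>i=0..m. x^i / fact i * (PP lam i $ m))"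
      by (simp add: Phi_def fps_compose_nth PP_def)
    also have "\<dots> = (\<Sum>i=1..m. x^i / fact i * (PP lam i $ m))"
      using that by (subst sum.atLeast_Suc_atMost) (simp_all add: PP_def)
    also have "\<dots> = F $ m" unfolding Fn
      by (rule sum.mono_neutral_left) (use that in \<open>auto simp: L5\<close>)
    finally show ?thesis .
  qed
  obtain m where m: "n = Suc m" using n by (cases n) auto
  have "(\<Sum>j=0..n-1. of_nat (n choose j) * dbernoulli lam j (1 - lam) * dbell lam (n - j) x)
      = (\<Sum>j=0..m. fact n * (QQ lam $ j * F $ (n - j)))"
  proof (rule sum.cong)
    fix j assume j: "j \<in> {0..m}"
    have "real (n choose j) * fact j * fact (n - j) = fact n"
      proof -
      have "real (fact j * fact (n - j) * (n choose j)) = real (fact n)"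
        using binomial_fact_lemma[of j n] j m by simp
      then show ?thesis by (simp only: of_nat_mult of_nat_fact mult_ac)
    qed
    moreover have "Phi $ (n - j) = F $ (n - j)" using j m by (intro PhiF) auto
    ultimately show "of_nat (n choose j) * dbernoulli lam j (1 - lam) * dbell lam (n - j) x
       = fact n * (QQ lam $ j * F $ (n - j))"
      unfolding bern bell by (simp only: H2)
  qed (simp add: m)
  also have "\<dots> = fact n * (\<Sum>j=0..n. QQ lam $ j * F $ (n - j))"
    by (simp add: m sum_distrib_left F0)
  also have "(\<Sum>j=0..n. QQ lam $ j * F $ (n - j)) = (QQ lam * F) $ n"
    by (simp add: fps_mult_nth)
  also have "QQ lam * F = (\<Sum>k=1..n. fps_const (x^k / fact k) * (QQ lam * PP lam k))"
    by (simp add: F_def sum_distrib_left mult_ac)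
  also have "\<dots> $ n = (\<Sum>k=1..n. x^k / fact k * (of_nat n * (PP lam k $ n) / of_nat k))"
    by (simp add: fps_sum_nth QP)
  finally have R: "(\<Sum>j=0..n-1. of_nat (n choose j) * dbernoulli lam j (1 - lam) * dbell lam (n - j) x)
      = fact n * (\<Sum>k=1..n. x^k / fact k * (of_nat n * (PP lam k $ n) / of_nat k))" .
  have "(1 / of_nat n) * (fact n * (\<Sum>k=1..n. x^k / fact k * (of_nat n * (PP lam k $ n) / of_nat k)))
      = (\<Sum>k=1..n. dstirling2 lam n k * x ^ k / of_nat k)"
    unfolding sum_distrib_left L10 TT_def using n
    by (intro sum.cong refl) (rule H1)
  then show ?thesis using R by simp
qed

theorem theorem12:
  fixes lam :: real and n :: nat
  assumes "lam \<noteq> 0" and "n \<ge> 1"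
  shows "(\<forall>x::real. (\<Sum>k=1..n. dstirling2 lam n k * x ^ k / of_nat k) =
            (1 / of_nat n) * (\<Sum>j=0..n-1. of_nat (n choose j) * dbernoulli lam j (1 - lam)
                                          * dbell lam (n - j) x))
       \<and> (\<Sum>k=1..n. dstirling2 lam n k / of_nat k) =
            (1 / of_nat n) * (\<Sum>j=0..n-1. of_nat (n choose j) * dbernoulli lam j (1 - lam)
                                          * dbell lam (n - j) 1)"
  using mainx[OF assms(2), of lam] mainx[OF assms(2), of lam 1] by simp

end
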